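(* Let $k\in\mathbb{Z}_+$ and let $a\in L_1(\mathbb{R}_+)$ be such that $\gamma_{a,k}\in L_\infty(\mathbb{R}_+)$, where $\gamma_{a,k}(\xi)=2\xi\int_{\mathbb{R}_+}a(v)\,\ell_k^2(2v\xi)\,\mathrm{d}v$, $\xi>0$. Then for each $n=1,2,\dots$, $$\lim_{\xi\to+\infty}\frac{\mathrm{d}^n\gamma_{a,k}(\xi)}{\mathrm{d}\xi^n}=0.$$
   Context: $\mathbb{R}_+=(0,\infty)$, $\mathbb{Z}_+=\{0,1,2,\dots\}$. $L_k(x)=\sum_{i=0}^k(-1)^i\binom{k}{i}\frac{x^i}{i!}$ is the Laguerre polynomial of degree $k$ and $\ell_k(x)=e^{-x/2}L_k(x)$. *)

theory Defs
  imports "HOL-Analysis.Analysis"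
begin

definition laguerre :: "nat \<Rightarrow> real \<Rightarrow> real" where
  "laguerre k x = (\<Sum>i=0..k. (-1)^i * real (k choose i) * x^i / fact i)"

definition laguerre_fun :: "nat \<Rightarrow> real \<Rightarrow> real" where
  "laguerre_fun k x = exp (- x / 2) * laguerre k x"

definition gamma_ak :: "(real \<Rightarrow> real) \<Rightarrow> nat \<Rightarrow> real \<Rightarrow> real" where
  "gamma_ak a k \<xi> = 2 * \<xi> * (LINT v:{0<..}|lborel. a v * (laguerre_fun k (2 * v * \<xi>))^2)"

end

theory Submission
  imports Defs "HOL-Computational_Algebra.Polynomial"
begin
definition Dop :: "real poly \<Rightarrow> real poly" where "Dop p = pderiv p - smult 2 p"
definition K :: "real poly \<Rightarrow> real \<Rightarrow> real" where "K p x = exp (-2*x) * poly p x"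

lemma K_deriv: "(K p has_real_derivative K (Dop p) x) (at x)"
  unfolding K_def Dop_def
  by (auto intro!: derivative_eq_intros poly_DERIV simp: algebra_simps)

lemma K_cont: "continuous_on A (K p)"
  unfolding K_def by (intro continuous_intros continuous_on_poly)

lemma K_monom: "x^m * K p x = K (monom 1 m * p) x"
  by (simp add: K_def poly_monom)

lemma xpow_exp_lim: "((\<lambda>x::real. exp (-2*x) * x^i) \<longlongrightarrow> 0) at_top"
proof -
  have "((\<lambda>x::real. (x^i / exp x) * exp (-x)) \<longlongrightarrow> 0 * 0) at_top"
    by (intro tendsto_mult tendsto_power_div_exp_0) real_asymp
  moreover have "(x^i / exp x) * exp (-x) = exp (-2*x) * x^i" for x::real
    by (simp add: exp_minus field_simps flip: exp_add)
  ultimately show ?thesis by simp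
qed

lemma K_lim: "(K p \<longlongrightarrow> 0) at_top"
proof -
  have "((\<lambda>x. \<Sum>i\<le>degree p. coeff p i * (exp (-2*x) * x^i)) \<longlongrightarrow> (\<Sum>i\<le>degree p. coeff p i * 0)) at_top"
    by (intro tendsto_sum tendsto_mult tendsto_const xpow_exp_lim)
  moreover have "K p x = (\<Sum>i\<le>degree p. coeff p i * (exp (-2*x) * x^i))" for x
    by (simp add: K_def poly_altdef sum_distrib_left mult_ac)
  hence "K p = (\<lambda>x. \<Sum>i\<le>degree p. coeff p i * (exp (-2*x) * x^i))" by (rule ext)
  ultimately show ?thesis by simp
qed

lemma K_bound: "\<exists>B. \<forall>x\<ge>0. \<bar>K p x\<bar> \<le> B"
proof -
  have "\<forall>\<^sub>F x in at_top. dist (K p x) 0 < 1"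
    using K_lim[of p] by (rule tendstoD) simp
  then obtain R where R: "\<And>x. x \<ge> R \<Longrightarrow> \<bar>K p x\<bar> < 1"
    by (auto simp: eventually_at_top_linorder)
  have "compact (K p ` {0..R})"
    by (intro compact_continuous_image K_cont compact_Icc)
  then obtain B where B: "\<And>y. y \<in> K p ` {0..R} \<Longrightarrow> norm y \<le> B"
    using compact_imp_bounded bounded_iff by metis
  show ?thesis
  proof (intro exI[of _ "max B 1"] allI impI)
    fix x :: real assume "x \<ge> 0"
    show "\<bar>K p x\<bar> \<le> max B 1"
    proof (cases "x \<le> R")
      case True then show ?thesis using B[of "K p x"] \<open>x\<ge>0\<close> by force
    next
      case False then show ?thesis using R[of x] by auto
    qed
  qed
qed

lemma Km_bound: "\<exists>B. \<forall>x\<ge>0. \<bar>x^m * K p x\<bar> \<le> B"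
  unfolding K_monom by (rule K_bound)

lemma Km_lim: "((\<lambda>x. x^m * K p x) \<longlongrightarrow> 0) at_top"
  unfolding K_monom by (rule K_lim)

lemma Km_scaled_bound:
  assumes B: "\<forall>x\<ge>0. \<bar>x^m * K p x\<bar> \<le> B" and c: "0 < c" "c \<le> \<xi>" and v: "v > 0"
  shows "\<bar>v^m * K p (v * \<xi>)\<bar> \<le> B / c^m"
proof -
  have xi: "\<xi> > 0" using c by simp
  have "v^m * K p (v * \<xi>) = ((v * \<xi>)^m * K p (v * \<xi>)) / \<xi>^m"
    using xi by (simp add: power_mult_distrib)
  hence "\<bar>v^m * K p (v * \<xi>)\<bar> = \<bar>(v * \<xi>)^m * K p (v * \<xi>)\<bar> / \<xi>^m"
    using xi by (simp add: abs_divide)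
  also have "\<dots> \<le> B / \<xi>^m"
    using B v xi by (intro divide_right_mono) auto
  also have "\<dots> \<le> B / c^m"
  proof -
    have B0: "B \<ge> 0" using B[rule_format, of 0] by (cases m) auto
    show ?thesis using c B0 by (intro divide_left_mono power_mono mult_pos_pos) auto
  qed
  finally show ?thesis .
qed

definition Phi :: "(real \<Rightarrow> real) \<Rightarrow> real poly \<Rightarrow> nat \<Rightarrow> real \<Rightarrow> real" where
  "Phi g p m \<xi> = (LINT v|lborel. g v * (v^m * K p (v * \<xi>)))"

lemma kern_meas: "(\<lambda>v. v^m * K p (v * \<xi>)) \<in> borel_measurable lborel"
proof -
  have "continuous_on UNIV (\<lambda>v. v^m * K p (v * \<xi>))"
    by (intro continuous_intros continuous_on_compose2[OF K_cont[of UNIV p]]) auto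
  thus ?thesis using borel_measurable_continuous_onI by simp
qed

lemma Phi_int:
  assumes g: "integrable lborel g" and g0: "\<And>v. v \<le> 0 \<Longrightarrow> g v = 0" and xi: "\<xi> > 0"
  shows "integrable lborel (\<lambda>v. g v * (v^m * K p (v * \<xi>)))"
proof -
  obtain B where B: "\<forall>x\<ge>0. \<bar>x^m * K p x\<bar> \<le> B" using Km_bound by blast
  have B0: "B \<ge> 0" using B[rule_format, of 0] by (cases m) auto
  show ?thesis
  proof (rule Bochner_Integration.integrable_bound[OF integrable_mult_right[OF integrable_abs[OF g], of "B / \<xi>^m"]])
    show "(\<lambda>v. g v * (v^m * K p (v * \<xi>))) \<in> borel_measurable lborel"
      using g kern_meas by measurable
    show "AE v in lborel. norm (g v * (v^m * K p (v * \<xi>))) \<le> norm (B / \<xi>^m * \<bar>g v\<bar>)"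
    proof (intro AE_I2)
      fix v :: real
      show "norm (g v * (v^m * K p (v * \<xi>))) \<le> norm (B / \<xi>^m * \<bar>g v\<bar>)"
      proof (cases "v > 0")
        case True
        have "\<bar>v^m * K p (v * \<xi>)\<bar> \<le> B / \<xi>^m"
          using Km_scaled_bound[OF B xi order_refl True] .
        hence "\<bar>g v\<bar> * \<bar>v^m * K p (v * \<xi>)\<bar> \<le> \<bar>g v\<bar> * (B / \<xi>^m)"
          by (intro mult_left_mono) auto
        thus ?thesis using B0 xi by (simp add: abs_mult mult_ac)
      next
        case False then show ?thesis using g0[of v] by simp
      qed
    qed
  qed
qed

lemma kern_deriv:
  "((\<lambda>\<xi>. g v * (v^m * K p (v * \<xi>))) has_real_derivative g v * (v^Suc m * K (Dop p) (v * \<xi>))) (at \<xi>)"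
proof -
  have "((\<lambda>\<xi>. K p (v * \<xi>)) has_real_derivative K (Dop p) (v * \<xi>) * v) (at \<xi>)"
    by (rule DERIV_chain2[OF K_deriv]) (auto intro!: derivative_eq_intros)
  from DERIV_cmult[OF this, of "g v * v^m"] show ?thesis by (simp add: mult_ac)
qed

lemma Phi_deriv:
  assumes g: "integrable lborel g" and g0: "\<And>v. v \<le> 0 \<Longrightarrow> g v = 0" and xi0: "\<xi>0 > 0"
  shows "(Phi g p m has_real_derivative Phi g (Dop p) (Suc m) \<xi>0) (at \<xi>0)"
proof -
  define T where "T = {\<xi>0/2..2*\<xi>0}"
  define f where "f = (\<lambda>\<xi> v. g v * (v^m * K p (v * \<xi>)))"
  define f' where "f' = (\<lambda>\<xi> v. g v * (v^Suc m * K (Dop p) (v * \<xi>)))"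
  obtain B where B: "\<forall>x\<ge>0. \<bar>x^Suc m * K (Dop p) x\<bar> \<le> B" using Km_bound by blast
  define C where "C = B / (\<xi>0/2)^Suc m"
  have bnd: "\<bar>f' \<xi> v\<bar> \<le> \<bar>g v\<bar> * C" if "\<xi> \<in> T" for \<xi> v
  proof (cases "v > 0")
    case True
    have "\<bar>v^Suc m * K (Dop p) (v * \<xi>)\<bar> \<le> C"
      unfolding C_def using that xi0 by (intro Km_scaled_bound[OF B _ _ True]) (auto simp: T_def)
    hence "\<bar>g v\<bar> * \<bar>v^Suc m * K (Dop p) (v * \<xi>)\<bar> \<le> \<bar>g v\<bar> * C"
      by (intro mult_left_mono) auto
    thus ?thesis by (simp add: f'_def abs_mult)
  next
    case False then show ?thesis using g0[of v] by (simp add: f'_def)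
  qed
  have qbnd: "\<bar>(f \<xi> v - f \<xi>0 v) / (\<xi> - \<xi>0)\<bar> \<le> \<bar>g v\<bar> * C" if "\<xi> \<in> T" "\<xi> \<noteq> \<xi>0" for \<xi> v
  proof -
    have "norm (f \<xi> v - f \<xi>0 v) \<le> (\<bar>g v\<bar> * C) * norm (\<xi> - \<xi>0)"
    proof (rule field_differentiable_bound[where f="\<lambda>\<xi>. f \<xi> v" and f'="\<lambda>\<xi>. f' \<xi> v"])
      show "convex T" by (simp add: T_def)
      show "((\<lambda>\<xi>. f \<xi> v) has_field_derivative f' z v) (at z within T)" for z
        unfolding f_def f'_def by (rule has_field_derivative_at_within[OF kern_deriv])
      show "norm (f' z v) \<le> \<bar>g v\<bar> * C" if "z \<in> T" for z using bnd[OF that] by simp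
      show "\<xi> \<in> T" by fact
      show "\<xi>0 \<in> T" using xi0 by (simp add: T_def)
    qed
    thus ?thesis using that by (simp add: abs_divide divide_le_eq)
  qed
  have intf: "integrable lborel (f \<xi>)" if "\<xi> > 0" for \<xi>
    unfolding f_def by (rule Phi_int[OF g g0 that])
  have intf': "integrable lborel (f' \<xi>)" if "\<xi> > 0" for \<xi>
    unfolding f'_def by (rule Phi_int[OF g g0 that])
  have ptw: "((\<lambda>y. (f y v - f \<xi>0 v) / (y - \<xi>0)) \<longlongrightarrow> f' \<xi>0 v) (at \<xi>0)" for v
    using kern_deriv[of g v m p \<xi>0] unfolding has_field_derivative_iff f_def f'_def .
  show ?thesis
    unfolding has_field_derivative_iff tendsto_at_iff_sequentially comp_def
  proof (intro allI impI)
    fix X :: "nat \<Rightarrow> real"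
    assume X: "\<forall>i. X i \<in> UNIV - {\<xi>0}" and lim: "X \<longlonglongrightarrow> \<xi>0"
    have "\<forall>\<^sub>F n in sequentially. dist (X n) \<xi>0 < \<xi>0/2"
      using lim xi0 by (intro tendstoD) auto
    then obtain N where N: "\<And>n. n \<ge> N \<Longrightarrow> dist (X n) \<xi>0 < \<xi>0/2"
      by (auto simp: eventually_sequentially)
    have XT: "X (n + N) \<in> T" for n
    proof -
      have "\<bar>X (n+N) - \<xi>0\<bar> < \<xi>0/2" using N[of "n+N"] by (simp add: dist_real_def)
      thus ?thesis unfolding T_def atLeastAtMost_iff by linarith
    qed
    have Xpos: "X (n + N) > 0" for n using XT[of n] xi0 by (auto simp: T_def)
    have eq: "(Phi g p m (X (n+N)) - Phi g p m \<xi>0) / (X (n+N) - \<xi>0)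
          = (LINT v|lborel. (f (X (n+N)) v - f \<xi>0 v) / (X (n+N) - \<xi>0))" for n
      using intf[OF Xpos[of n]] intf[OF xi0]
      by (simp add: Phi_def f_def)
    have "(\<lambda>n. (LINT v|lborel. (f (X (n+N)) v - f \<xi>0 v) / (X (n+N) - \<xi>0))) \<longlonglongrightarrow> (LINT v|lborel. f' \<xi>0 v)"
    proof (rule integral_dominated_convergence[where w="\<lambda>v. \<bar>g v\<bar> * C"])
      show "f' \<xi>0 \<in> borel_measurable lborel" using intf'[OF xi0] by auto
      show "(\<lambda>v. (f (X (n+N)) v - f \<xi>0 v) / (X (n+N) - \<xi>0)) \<in> borel_measurable lborel" for n
        using intf[OF Xpos[of n]] intf[OF xi0] by auto
      show "integrable lborel (\<lambda>v. \<bar>g v\<bar> * C)" using g by auto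
      show "AE v in lborel. (\<lambda>n. (f (X (n+N)) v - f \<xi>0 v) / (X (n+N) - \<xi>0)) \<longlonglongrightarrow> f' \<xi>0 v"
      proof (intro AE_I2)
        fix v
        have a: "\<And>i. X (i+N) \<in> UNIV - {\<xi>0}" using X by auto
        have b: "(\<lambda>i. X (i+N)) \<longlonglongrightarrow> \<xi>0" using lim by (rule LIMSEQ_ignore_initial_segment)
        have "\<forall>Y. (\<forall>i. Y i \<in> UNIV - {\<xi>0}) \<longrightarrow> Y \<longlonglongrightarrow> \<xi>0 \<longrightarrow> (\<lambda>i. (f (Y i) v - f \<xi>0 v) / (Y i - \<xi>0)) \<longlonglongrightarrow> f' \<xi>0 v"
          using ptw[of v] unfolding tendsto_at_iff_sequentially comp_def .
        from this[rule_format, of "\<lambda>i. X (i+N)", OF a b]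
        show "(\<lambda>n. (f (X (n+N)) v - f \<xi>0 v) / (X (n+N) - \<xi>0)) \<longlonglongrightarrow> f' \<xi>0 v" .
      qed
      show "AE v in lborel. norm ((f (X (n+N)) v - f \<xi>0 v) / (X (n+N) - \<xi>0)) \<le> \<bar>g v\<bar> * C" for n
        using qbnd[OF XT[of n]] X by auto
    qed
    hence "(\<lambda>n. (Phi g p m (X (n+N)) - Phi g p m \<xi>0) / (X (n+N) - \<xi>0)) \<longlonglongrightarrow> Phi g (Dop p) (Suc m) \<xi>0"
      unfolding eq by (simp add: Phi_def f'_def)
    thus "(\<lambda>n. (Phi g p m (X n) - Phi g p m \<xi>0) / (X n - \<xi>0)) \<longlonglongrightarrow> Phi g (Dop p) (Suc m) \<xi>0"
      by (rule LIMSEQ_offset)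
  qed
qed

lemma Phi_lim:
  assumes g: "integrable lborel g" and g0: "\<And>v. v \<le> 0 \<Longrightarrow> g v = 0"
  shows "((\<lambda>\<xi>. \<xi>^m * Phi g p m \<xi>) \<longlongrightarrow> 0) at_top"
proof -
  obtain B where B: "\<forall>x\<ge>0. \<bar>x^m * K p x\<bar> \<le> B" using Km_bound by blast
  define s where "s = (\<lambda>\<xi> v. g v * ((v * \<xi>)^m * K p (v * \<xi>)))"
  have eq: "\<xi>^m * Phi g p m \<xi> = (LINT v|lborel. s \<xi> v)" for \<xi>
  proof -
    have "\<xi>^m * Phi g p m \<xi> = (LINT v|lborel. \<xi>^m * (g v * (v^m * K p (v * \<xi>))))"
      unfolding Phi_def by simp
    also have "\<dots> = (LINT v|lborel. s \<xi> v)"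
      unfolding s_def by (rule Bochner_Integration.integral_cong) (auto simp: power_mult_distrib mult_ac)
    finally show ?thesis .
  qed
  have "((\<lambda>\<xi>. LINT v|lborel. s \<xi> v) \<longlongrightarrow> (LINT (v::real)|lborel. 0)) at_top"
  proof (rule integral_dominated_convergence_at_top[where w="\<lambda>v. \<bar>g v\<bar> * B" and s=s and f="\<lambda>v. 0" and M=lborel])
    show "(\<lambda>v. 0::real) \<in> borel_measurable lborel" by simp
    have gm: "g \<in> borel_measurable lborel" using g by auto
    show "s t \<in> borel_measurable lborel" for t
    proof -
      have "continuous_on UNIV (\<lambda>v. (v * t)^m * K p (v * t))"
        by (intro continuous_intros continuous_on_compose2[OF K_cont[of UNIV p]]) auto
      hence "(\<lambda>v. (v * t)^m * K p (v * t)) \<in> borel_measurable lborel"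
        using borel_measurable_continuous_onI by simp
      thus ?thesis unfolding s_def using gm by measurable
    qed
    show "integrable lborel (\<lambda>v. \<bar>g v\<bar> * B)" using g by auto
    show "AE v in lborel. ((\<lambda>i. s i v) \<longlongrightarrow> 0) at_top"
    proof (intro AE_I2)
      fix v :: real
      show "((\<lambda>i. s i v) \<longlongrightarrow> 0) at_top"
      proof (cases "v > 0")
        case True
        have "filterlim (\<lambda>\<xi>. v * \<xi>) at_top at_top"
          by (rule filterlim_tendsto_pos_mult_at_top[OF tendsto_const True filterlim_ident])
        from filterlim_compose[OF Km_lim this]
        have "((\<lambda>\<xi>. (v * \<xi>)^m * K p (v * \<xi>)) \<longlongrightarrow> 0) at_top" by (simp add: o_def)
        from tendsto_mult[OF tendsto_const[of "g v"] this] show ?thesis by (simp add: s_def)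
      next
        case False then show ?thesis using g0[of v] by (simp add: s_def)
      qed
    qed
    show "\<forall>\<^sub>F i in at_top. AE v in lborel. norm (s i v) \<le> \<bar>g v\<bar> * B"
      using eventually_gt_at_top[of 0]
    proof eventually_elim
      case (elim \<xi>)
      show ?case
      proof (intro AE_I2)
        fix v :: real
        show "norm (s \<xi> v) \<le> \<bar>g v\<bar> * B"
        proof (cases "v > 0")
          case True
          hence "\<bar>(v * \<xi>)^m * K p (v * \<xi>)\<bar> \<le> B" using B elim by auto
          hence "\<bar>g v\<bar> * \<bar>(v * \<xi>)^m * K p (v * \<xi>)\<bar> \<le> \<bar>g v\<bar> * B" by (intro mult_left_mono) auto
          thus ?thesis by (simp add: s_def abs_mult)
        next
          case False then show ?thesis using g0[of v] by (simp add: s_def)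
        qed
      qed
    qed
  qed
  thus ?thesis unfolding eq by simp
qed

definition Lp :: "nat \<Rightarrow> real poly" where
  "Lp k = (\<Sum>i=0..k. monom ((-1)^i * real (k choose i) * 2^i / fact i) i)"

lemma poly_Lp: "poly (Lp k) x = laguerre k (2*x)"
  unfolding Lp_def laguerre_def poly_sum poly_monom
  by (rule sum.cong) (auto simp: power_mult_distrib)

lemma lf_K: "(laguerre_fun k (2 * v * \<xi>))^2 = K ((Lp k)^2) (v * \<xi>)"
proof -
  have "exp (- (2 * v * \<xi>) / 2) ^ 2 = exp (-2 * (v * \<xi>))"
    by (simp add: power2_eq_square flip: exp_add)
  thus ?thesis
    unfolding laguerre_fun_def K_def poly_power poly_Lp
    by (simp add: power_mult_distrib mult.assoc)
qed

theorem mainTheorem6: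
  fixes a :: "real \<Rightarrow> real" and k :: nat
  assumes a_L1: "set_integrable lborel {0<..} a"
    and gamma_Linf: "\<exists>C. AE \<xi> in lebesgue_on {0<..}. \<bar>gamma_ak a k \<xi>\<bar> \<le> C"
  shows "\<forall>n\<ge>1. (\<forall>\<xi>>0. ((deriv ^^ (n - 1)) (gamma_ak a k)) differentiable (at \<xi>))
              \<and> (((deriv ^^ n) (gamma_ak a k)) \<longlongrightarrow> 0) at_top"
proof -
  define g where "g = (\<lambda>v. indicator {0<..} v * a v :: real)"
  have g: "integrable lborel g" using a_L1 unfolding set_integrable_def g_def by simp
  have g0: "g v = 0" if "v \<le> 0" for v using that by (simp add: g_def)
  define p0 where "p0 = (Lp k)^2"
  define q where "q = (\<lambda>n. (Dop ^^ n) p0)"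
  define H where "H = (\<lambda>n \<xi>. 2 * \<xi> * Phi g (q n) n \<xi> + 2 * real n * Phi g (q (n - 1)) (n - 1) \<xi>)"
  have gam: "gamma_ak a k \<xi> = H 0 \<xi>" for \<xi>
  proof -
    have fe: "(\<lambda>v. indicator {0<..} v *\<^sub>R (a v * (laguerre_fun k (2 * v * \<xi>))^2))
        = (\<lambda>v. g v * (v^0 * K p0 (v * \<xi>)))"
      by (rule ext) (simp add: lf_K g_def p0_def)
    have "gamma_ak a k \<xi> = 2 * \<xi> * Phi g p0 0 \<xi>"
      unfolding gamma_ak_def Phi_def set_lebesgue_integral_def fe ..
    thus ?thesis by (simp add: H_def q_def)
  qed
  have Hd: "(H n has_real_derivative H (Suc n) \<xi>) (at \<xi>)" if "\<xi> > 0" for n \<xi>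
  proof -
    have d: "(H n has_real_derivative
        2 * Phi g (q n) n \<xi> + 2 * \<xi> * Phi g (Dop (q n)) (Suc n) \<xi>
        + 2 * real n * Phi g (Dop (q (n - 1))) (Suc (n - 1)) \<xi>) (at \<xi>)"
      unfolding H_def
      by (auto intro!: derivative_eq_intros Phi_deriv[OF g g0 that])
    have "2 * Phi g (q n) n \<xi> + 2 * \<xi> * Phi g (Dop (q n)) (Suc n) \<xi>
        + 2 * real n * Phi g (Dop (q (n - 1))) (Suc (n - 1)) \<xi> = H (Suc n) \<xi>"
    proof (cases n)
      case 0 then show ?thesis by (simp add: H_def q_def)
    next
      case (Suc m) then show ?thesis by (simp add: H_def q_def algebra_simps)
    qed
    with d show ?thesis by simp
  qed
  have main: "\<forall>\<xi>>0. (deriv ^^ n) (gamma_ak a k) \<xi> = H n \<xi>" for n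
  proof (induction n)
    case 0 then show ?case by (simp add: gam)
  next
    case (Suc n)
    show ?case
    proof (intro allI impI)
      fix \<xi> :: real assume xi: "\<xi> > 0"
      have "((deriv ^^ n) (gamma_ak a k) has_real_derivative H (Suc n) \<xi>) (at \<xi>)"
        by (rule has_field_derivative_transform_within_open[OF Hd[OF xi], of "{0<..}"])
           (use xi Suc in auto)
      thus "(deriv ^^ Suc n) (gamma_ak a k) \<xi> = H (Suc n) \<xi>"
        by (simp add: DERIV_imp_deriv)
    qed
  qed
  have Dd: "((deriv ^^ n) (gamma_ak a k) has_real_derivative H (Suc n) \<xi>) (at \<xi>)" if "\<xi> > 0" for n \<xi>
    by (rule has_field_derivative_transform_within_open[OF Hd[OF that], of "{0<..}"])
       (use that main in auto)
  show ?thesis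
  proof (intro allI impI conjI)
    fix n :: nat and \<xi> :: real assume n: "n \<ge> 1" and xi: "\<xi> > 0"
    have "((deriv ^^ (n - 1)) (gamma_ak a k) has_real_derivative H (Suc (n - 1)) \<xi>) (at \<xi>)"
      by (rule Dd[OF xi])
    thus "(deriv ^^ (n - 1)) (gamma_ak a k) differentiable (at \<xi>)"
      using real_differentiable_def by blast
  next
    fix n :: nat assume n: "n \<ge> 1"
    have L1: "((\<lambda>\<xi>. \<xi>^n * Phi g (q n) n \<xi>) \<longlongrightarrow> 0) at_top" by (rule Phi_lim[OF g g0])
    have L2: "((\<lambda>\<xi>. \<xi>^(n-1) * Phi g (q (n-1)) (n-1) \<xi>) \<longlongrightarrow> 0) at_top" by (rule Phi_lim[OF g g0])
    have L3: "((\<lambda>\<xi>::real. inverse \<xi> ^ (n-1)) \<longlongrightarrow> 0 ^ (n-1)) at_top"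
      by (intro tendsto_power tendsto_inverse_0_at_top filterlim_ident)
    have "((\<lambda>\<xi>. 2 * (\<xi>^n * Phi g (q n) n \<xi>) * inverse \<xi> ^ (n-1)
            + 2 * real n * (\<xi>^(n-1) * Phi g (q (n-1)) (n-1) \<xi>) * inverse \<xi> ^ (n-1))
          \<longlongrightarrow> 2 * 0 * 0 ^ (n-1) + 2 * real n * 0 * 0 ^ (n-1)) at_top"
      by (intro tendsto_intros L1 L2 L3)
    hence lim: "((\<lambda>\<xi>. 2 * (\<xi>^n * Phi g (q n) n \<xi>) * inverse \<xi> ^ (n-1)
            + 2 * real n * (\<xi>^(n-1) * Phi g (q (n-1)) (n-1) \<xi>) * inverse \<xi> ^ (n-1))
          \<longlongrightarrow> 0) at_top" by simp
    show "((deriv ^^ n) (gamma_ak a k) \<longlongrightarrow> 0) at_top"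
    proof (rule Lim_transform_eventually[OF lim])
      show "\<forall>\<^sub>F \<xi> in at_top. 2 * (\<xi>^n * Phi g (q n) n \<xi>) * inverse \<xi> ^ (n-1)
            + 2 * real n * (\<xi>^(n-1) * Phi g (q (n-1)) (n-1) \<xi>) * inverse \<xi> ^ (n-1)
            = (deriv ^^ n) (gamma_ak a k) \<xi>"
        using eventually_gt_at_top[of 0]
      proof eventually_elim
        case (elim \<xi>)
        have e1: "\<xi>^n * inverse \<xi> ^ (n-1) = \<xi>"
          using n elim by (cases n) (auto simp: field_simps power_inverse)
        have e2: "\<xi>^(n-1) * inverse \<xi> ^ (n-1) = 1"
          using elim by (simp add: field_simps power_inverse)
        have "2 * (\<xi>^n * Phi g (q n) n \<xi>) * inverse \<xi> ^ (n-1)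
            + 2 * real n * (\<xi>^(n-1) * Phi g (q (n-1)) (n-1) \<xi>) * inverse \<xi> ^ (n-1)
            = 2 * (\<xi>^n * inverse \<xi> ^ (n-1)) * Phi g (q n) n \<xi>
            + 2 * real n * (\<xi>^(n-1) * inverse \<xi> ^ (n-1)) * Phi g (q (n-1)) (n-1) \<xi>"
          by (simp add: mult_ac)
        also have "\<dots> = H n \<xi>" unfolding e1 e2 H_def by simp
        also have "\<dots> = (deriv ^^ n) (gamma_ak a k) \<xi>" using main elim by simp
        finally show ?case .
      qed
    qed
  qed
qed

end
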